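(* Let $s, n \ge 3$ and suppose there exist an $(n, d(F), \lambda(F))$-graph $F$ and an $(n, d(G), \lambda(G))$-graph $G$ on the same vertex set $V$ such that the pair $(F,G)$ is $H_s$-free. Let \[ \eta = \max\left\{ \frac{\lambda(G)^2}{d(G)^2}, \frac{\lambda(F)\lambda(G)}{d(F)d(G)} \right\}, \qquad w = \frac{4 n \log n}{d(G)}. \] Then there exists a $T_s$-free digraph $D$ on $d(F)\, n$ vertices such that for all $k \ge w$, \[ \mathrm{fwi}_k(D) \le 16^k \eta^{k-w} (d(F)\, n)^k. \]
   Context: Graphs may have loops (at most one per vertex); in the adjacency matrix a loop is a $1$ on the diagonal and contributes one to the degree. A graph is an $(n,d,\lambda)$-graph if it has $n$ vertices, is $d$-regular, and all eigenvalues of its adjacency matrix other than the largest one (which equals $d$) are at most $\lambda$ in absolute value. An ordered pair of graphs $(F,G)$ on the same vertex set is $H_s$-free if there is no $2s$-tuple of (not necessarily distinct) vertices $(a_1,b_1,\dots,a_s,b_s)$ with $a_ib_i \in E(F)$ for all $i\in[s]$ and $a_ib_j \in E(G)$ for all $1 \le i < j \le s$ (an edge $aa$ means a loop). $T_s$ is the transitive tournament on $s$ vertices; a digraph is $T_s$-free if it contains no copy of $T_s$. For a digraph $D$, a $k$-tuple $(v_1,\dots,v_k)\in V(D)^k$ is forward independent if there are no $i<j$ with $(v_i,v_j)$ an arc of $D$; $\mathrm{fwi}_k(D)$ is the number of such $k$-tuples. $\log$ is the natural logarithm. *)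

theory Defs
  imports Complex_Main "HOL-Library.Multiset" "HOL-Computational_Algebra.Polynomial"
    "Jordan_Normal_Form.Char_Poly"
begin

(* Graphs (loops allowed) on the vertex set {0..<n}, given by a symmetric
   edge relation E; E v v is a loop. *)
definition graph_on :: "nat \<Rightarrow> (nat \<Rightarrow> nat \<Rightarrow> bool) \<Rightarrow> bool" where
  "graph_on n E \<longleftrightarrow> (\<forall>u v. E u v \<longrightarrow> u < n \<and> v < n) \<and> (\<forall>u v. E u v \<longrightarrow> E v u)"

definition adj_mat :: "nat \<Rightarrow> (nat \<Rightarrow> nat \<Rightarrow> bool) \<Rightarrow> real mat" where
  "adj_mat n E = mat n n (\<lambda>(i,j). if E i j then 1 else 0)"

(* a loop contributes one to the degree *)
definition degree :: "nat \<Rightarrow> (nat \<Rightarrow> nat \<Rightarrow> bool) \<Rightarrow> nat \<Rightarrow> nat" where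
  "degree n E v = card {u. u < n \<and> E v u}"

definition adj_eigenvalues :: "nat \<Rightarrow> (nat \<Rightarrow> nat \<Rightarrow> bool) \<Rightarrow> complex multiset" where
  "adj_eigenvalues n E = proots (char_poly (map_mat complex_of_real (adj_mat n E)))"

(* (n,d,lambda)-graph: n vertices, d-regular, and all eigenvalues other than
   (one copy of) the largest one, d, are at most lambda in absolute value *)
definition ndl_graph :: "nat \<Rightarrow> nat \<Rightarrow> real \<Rightarrow> (nat \<Rightarrow> nat \<Rightarrow> bool) \<Rightarrow> bool" where
  "ndl_graph n d lam E \<longleftrightarrow> graph_on n E \<and> (\<forall>v<n. degree n E v = d) \<and>
     (\<forall>\<mu> \<in># adj_eigenvalues n E - {# complex_of_nat d #}. cmod \<mu> \<le> lam)"

definition Hs_free :: "nat \<Rightarrow> nat \<Rightarrow> (nat \<Rightarrow> nat \<Rightarrow> bool) \<Rightarrow> (nat \<Rightarrow> nat \<Rightarrow> bool) \<Rightarrow> bool" where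
  "Hs_free n s F G \<longleftrightarrow> \<not> (\<exists>a b :: nat \<Rightarrow> nat.
      (\<forall>i<s. a i < n \<and> b i < n) \<and> (\<forall>i<s. F (a i) (b i)) \<and>
      (\<forall>i j. i < j \<and> j < s \<longrightarrow> G (a i) (b j)))"

definition digraph_on :: "nat \<Rightarrow> (nat \<Rightarrow> nat \<Rightarrow> bool) \<Rightarrow> bool" where
  "digraph_on N A \<longleftrightarrow> (\<forall>u v. A u v \<longrightarrow> u < N \<and> v < N) \<and> (\<forall>v. \<not> A v v)"

definition Ts_free :: "nat \<Rightarrow> nat \<Rightarrow> (nat \<Rightarrow> nat \<Rightarrow> bool) \<Rightarrow> bool" where
  "Ts_free N s A \<longleftrightarrow> \<not> (\<exists>f :: nat \<Rightarrow> nat. inj_on f {0..<s} \<and> (\<forall>i<s. f i < N) \<and>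
      (\<forall>i j. i < j \<and> j < s \<longrightarrow> A (f i) (f j)))"

definition fwi :: "nat \<Rightarrow> (nat \<Rightarrow> nat \<Rightarrow> bool) \<Rightarrow> nat \<Rightarrow> nat" where
  "fwi N A k = card {xs :: nat list. length xs = k \<and> set xs \<subseteq> {0..<N} \<and>
      (\<forall>i j. i < j \<and> j < k \<longrightarrow> \<not> A (xs ! i) (xs ! j))}"

(* real power with the convention x^0 = 1 also for x = 0 *)
definition rpow :: "real \<Rightarrow> real \<Rightarrow> real" where
  "rpow x y = (if y = 0 then 1 else x powr y)"

end

theory Submission
  imports Defs "Jordan_Normal_Form.Spectral_Radius"
begin


definition Pm :: "nat \<Rightarrow> 'a::comm_ring_1 mat" where
  "Pm n = mat n n (\<lambda>(i,k). of_bool (k = 0) + of_bool (k \<noteq> 0 \<and> k = i))"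
definition Pim :: "nat \<Rightarrow> 'a::comm_ring_1 mat" where
  "Pim n = mat n n (\<lambda>(i,k). of_bool (i = k) - of_bool (i \<noteq> 0 \<and> k = 0))"

lemma sum_delta_split:
  fixes f :: "nat \<Rightarrow> 'a::comm_ring_1"
  assumes "i < n" "0 < n"
  shows "(\<Sum>k = 0..<n. (of_bool (k = 0) + of_bool (k \<noteq> 0 \<and> k = i)) * f k) = f 0 + of_bool (i \<noteq> 0) * f i"
proof -
  have "(\<Sum>k = 0..<n. (of_bool (k = 0) + of_bool (k \<noteq> 0 \<and> k = i)) * f k) =
     (\<Sum>k = 0..<n. (if k = 0 then f k else 0)) + (\<Sum>k = 0..<n. (if k = i then of_bool (i \<noteq> 0) * f k else 0))"
    by (subst sum.distrib[symmetric], rule sum.cong, auto)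
  also have "\<dots> = f 0 + of_bool (i \<noteq> 0) * f i"
    using assms by (simp add: sum.delta')
  finally show ?thesis .
qed

lemma sum_delta_split2:
  fixes f :: "nat \<Rightarrow> 'a::comm_ring_1"
  assumes "i < n" "0 < n"
  shows "(\<Sum>k = 0..<n. (of_bool (i = k) - of_bool (i \<noteq> 0 \<and> k = 0)) * f k) = f i - of_bool (i \<noteq> 0) * f 0"
proof -
  have "(\<Sum>k = 0..<n. (of_bool (i = k) - of_bool (i \<noteq> 0 \<and> k = 0)) * f k) =
     (\<Sum>k = 0..<n. (if k = i then f k else 0)) - (\<Sum>k = 0..<n. (if k = 0 then of_bool (i \<noteq> 0) * f k else 0))"
    by (subst sum_subtractf[symmetric], rule sum.cong, auto)
  also have "\<dots> = f i - of_bool (i \<noteq> 0) * f 0"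
    using assms by (simp add: sum.delta')
  finally show ?thesis .
qed

lemma P_Pi: assumes "0 < n" shows "Pm n * Pim n = (1\<^sub>m n :: 'a::comm_ring_1 mat)"
proof (rule eq_matI)
  fix i j assume ij: "i < dim_row (1\<^sub>m n :: 'a mat)" "j < dim_col (1\<^sub>m n :: 'a mat)"
  hence "(Pm n * Pim n) $$ (i,j) = (\<Sum>k = 0..<n. (of_bool (k = 0) + of_bool (k \<noteq> 0 \<and> k = i)) * (of_bool (k = j) - of_bool (k \<noteq> 0 \<and> j = 0)) :: 'a)"
    by (simp add: Pm_def Pim_def scalar_prod_def)
  also have "\<dots> = (1\<^sub>m n :: 'a mat) $$ (i,j)"
    using ij assms by (subst sum_delta_split, auto)
  finally show "(Pm n * Pim n) $$ (i,j) = (1\<^sub>m n :: 'a mat) $$ (i,j)" .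
qed (auto simp: Pm_def Pim_def)

lemma Pi_P: assumes "0 < n" shows "Pim n * Pm n = (1\<^sub>m n :: 'a::comm_ring_1 mat)"
proof (rule eq_matI)
  fix i j assume ij: "i < dim_row (1\<^sub>m n :: 'a mat)" "j < dim_col (1\<^sub>m n :: 'a mat)"
  hence "(Pim n * Pm n) $$ (i,j) = (\<Sum>k = 0..<n. (of_bool (i = k) - of_bool (i \<noteq> 0 \<and> k = 0)) * (of_bool (j = 0) + of_bool (j \<noteq> 0 \<and> j = k)) :: 'a)"
    by (simp add: Pm_def Pim_def scalar_prod_def)
  also have "\<dots> = (1\<^sub>m n :: 'a mat) $$ (i,j)"
    using ij assms by (subst sum_delta_split2, auto)
  finally show "(Pim n * Pm n) $$ (i,j) = (1\<^sub>m n :: 'a mat) $$ (i,j)" .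
qed (auto simp: Pm_def Pim_def)

definition blk3 :: "'a::comm_ring_1 mat \<Rightarrow> nat \<Rightarrow> 'a mat" where
  "blk3 M n = mat (n-1) (n-1) (\<lambda>(i,j). M $$ (i+1,j+1) - M $$ (0,j+1))"

lemma block_charpoly:
  fixes M :: "'a::{comm_ring_1,idom} mat"
  assumes M: "M \<in> carrier_mat n n" and n: "0 < n"
    and rs: "\<And>i. i < n \<Longrightarrow> (\<Sum>k = 0..<n. M $$ (i,k)) = r"
  shows "char_poly M = [:-r,1:] * char_poly (blk3 M n)"
proof -
  define A1 where "A1 = (mat 1 1 (\<lambda>_. r) :: 'a mat)"
  define A2 where "A2 = (mat 1 (n-1) (\<lambda>(_,j). M $$ (0,j+1)) :: 'a mat)"
  define M' where "M' = four_block_mat A1 A2 (0\<^sub>m (n-1) 1) (blk3 M n)"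
  have A1: "A1 \<in> carrier_mat 1 1" and A2: "A2 \<in> carrier_mat 1 (n-1)"
    and A3: "blk3 M n \<in> carrier_mat (n-1) (n-1)" by (auto simp: A1_def A2_def blk3_def)
  have M'c: "M' \<in> carrier_mat n n" unfolding M'_def using A1 A2 A3 n
    by (metis Suc_pred' four_block_carrier_mat plus_1_eq_Suc)
  have M'e: "M' $$ (i,j) = (if i = 0 then (if j = 0 then r else M $$ (0,j))
      else if j = 0 then 0 else M $$ (i,j) - M $$ (0,j))" if "i < n" "j < n" for i j
    using that n A1 A2 A3 by (auto simp: M'_def A1_def A2_def blk3_def)
  have Pc: "Pm n \<in> carrier_mat n n" "Pim n \<in> carrier_mat n n" by (auto simp: Pm_def Pim_def)
  have MP: "M * Pm n = Pm n * M'"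
  proof (rule eq_matI)
    fix i j assume ij: "i < dim_row (Pm n * M')" "j < dim_col (Pm n * M')"
    hence ij': "i < n" "j < n" using M'c Pc by (auto simp: Pm_def)
    have "(Pm n * M') $$ (i,j) = (\<Sum>k = 0..<n. (of_bool (k = 0) + of_bool (k \<noteq> 0 \<and> k = i)) * M' $$ (k,j))"
      using ij' M'c by (simp add: Pm_def scalar_prod_def)
    also have "\<dots> = M' $$ (0,j) + of_bool (i \<noteq> 0) * M' $$ (i,j)"
      by (rule sum_delta_split[OF ij'(1) n, of "\<lambda>k. M' $$ (k,j)"])
    finally have R: "(Pm n * M') $$ (i,j) = M' $$ (0,j) + of_bool (i \<noteq> 0) * M' $$ (i,j)" .
    have "(M * Pm n) $$ (i,j) = (\<Sum>k = 0..<n. M $$ (i,k) * (of_bool (j = 0) + of_bool (j \<noteq> 0 \<and> j = k)))"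
      using ij' M by (simp add: Pm_def scalar_prod_def)
    also have "\<dots> = (\<Sum>k = 0..<n. of_bool (j = 0) * M $$ (i,k)) + (\<Sum>k = 0..<n. (if k = j then of_bool (j \<noteq> 0) * M $$ (i,k) else 0))"
      by (subst sum.distrib[symmetric], rule sum.cong, auto simp: algebra_simps)
    also have "\<dots> = of_bool (j = 0) * r + of_bool (j \<noteq> 0) * M $$ (i,j)"
      using ij' by (simp add: sum_distrib_left[symmetric] rs sum.delta')
    finally have L: "(M * Pm n) $$ (i,j) = of_bool (j = 0) * r + of_bool (j \<noteq> 0) * M $$ (i,j)" .
    show "(M * Pm n) $$ (i,j) = (Pm n * M') $$ (i,j)"
      unfolding L R using ij' n by (auto simp: M'e)
  qed (use M M'c Pc in \<open>auto simp: Pm_def\<close>)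
  have "M = M * (Pm n * Pim n)" unfolding P_Pi[OF n] using M by simp
  also have "\<dots> = (M * Pm n) * Pim n" using M Pc by (rule assoc_mult_mat[symmetric])
  also have "\<dots> = Pm n * M' * Pim n" unfolding MP ..
  finally have "similar_mat_wit M M' (Pm n) (Pim n)"
    unfolding similar_mat_wit_def Let_def using M M'c Pc P_Pi[OF n] Pi_P[OF n] by auto
  hence "char_poly M = char_poly M'" by (intro char_poly_similar, auto simp: similar_mat_def)
  also have "\<dots> = char_poly A1 * char_poly (blk3 M n)"
    unfolding M'_def by (rule char_poly_four_block_zeros_col[OF A1 A2 A3])
  also have "char_poly A1 = [:-r,1:]"
    by (simp add: A1_def char_poly_defs det_def sign_def)
  finally show ?thesis .
qed

definition bmat :: "nat \<Rightarrow> (nat \<Rightarrow> nat \<Rightarrow> bool) \<Rightarrow> nat \<Rightarrow> complex mat" where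
  "bmat n E d = mat n n (\<lambda>(i,j). complex_of_real ((if E i j then 1 else 0) - real d / real n))"

lemma card_deg_sum:
  "(\<Sum>k = 0..<n. (if E i k then 1 else 0 :: 'a::comm_ring_1)) = of_nat (degree n E i)"
proof -
  have "(\<Sum>k = 0..<n. (if E i k then 1 else 0 :: 'a)) = of_nat (card ({0..<n} \<inter> {k. E i k}))"
    by (simp add: sum.If_cases)
  also have "{0..<n} \<inter> {k. E i k} = {u. u < n \<and> E i u}" by auto
  finally show ?thesis by (simp add: degree_def)
qed

lemma ndl_spec:
  assumes ndl: "ndl_graph n d lam E" and n: "2 \<le> n"
  shows "0 \<le> lam" "\<And>\<mu>. poly (char_poly (bmat n E d)) \<mu> = 0 \<Longrightarrow> cmod \<mu> \<le> lam"
proof -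
  define AC where "AC = map_mat complex_of_real (adj_mat n E)"
  have n0: "0 < n" using n by auto
  have AC: "AC \<in> carrier_mat n n" by (simp add: AC_def adj_mat_def)
  have BC: "bmat n E d \<in> carrier_mat n n" by (simp add: bmat_def)
  from ndl have deg: "\<And>v. v < n \<Longrightarrow> degree n E v = d"
    and ev: "\<And>\<mu>. \<mu> \<in># adj_eigenvalues n E - {# complex_of_nat d #} \<Longrightarrow> cmod \<mu> \<le> lam"
    unfolding ndl_graph_def by auto
  have rsA: "(\<Sum>k = 0..<n. AC $$ (i,k)) = complex_of_nat d" if "i < n" for i
  proof -
    have "(\<Sum>k = 0..<n. AC $$ (i,k)) = (\<Sum>k = 0..<n. (if E i k then 1 else 0 :: complex))"
      using that by (intro sum.cong, auto simp: AC_def adj_mat_def)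
    also have "\<dots> = complex_of_nat d" using card_deg_sum deg[OF that] by metis
    finally show ?thesis .
  qed
  have rsB: "(\<Sum>k = 0..<n. bmat n E d $$ (i,k)) = 0" if "i < n" for i
  proof -
    have "(\<Sum>k = 0..<n. bmat n E d $$ (i,k)) = (\<Sum>k = 0..<n. (if E i k then 1 else 0 :: complex)) - (\<Sum>k = 0..<n. complex_of_real (real d / real n))"
      using that by (subst sum_subtractf[symmetric], intro sum.cong, auto simp: bmat_def)
    also have "\<dots> = complex_of_nat d - complex_of_nat d"
      using card_deg_sum[of E i n, where 'a=complex] deg[OF that] n0 by simp
    finally show ?thesis by simp
  qed
  have blk: "blk3 (bmat n E d) n = blk3 AC n"
    by (rule eq_matI, auto simp: blk3_def bmat_def AC_def adj_mat_def)
  define cp3 where "cp3 = char_poly (blk3 AC n)"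
  have cpA: "char_poly AC = [:- complex_of_nat d, 1:] * cp3"
    unfolding cp3_def by (rule block_charpoly[OF AC n0 rsA])
  have cpB: "char_poly (bmat n E d) = [:0, 1:] * cp3"
    unfolding cp3_def blk[symmetric] using block_charpoly[OF BC n0 rsB] by simp
  have B3: "blk3 AC n \<in> carrier_mat (n-1) (n-1)" by (simp add: blk3_def)
  have cp3nz: "cp3 \<noteq> 0"
    using degree_monic_char_poly[OF B3] unfolding cp3_def by auto
  have lin: "[:- complex_of_nat d, 1:] \<noteq> 0" by simp
  have eig: "adj_eigenvalues n E = {# complex_of_nat d #} + proots cp3"
    unfolding adj_eigenvalues_def AC_def[symmetric] cpA proots_mult[OF lin cp3nz]
    by (simp add: proots_linear_factor)
  have rest: "adj_eigenvalues n E - {# complex_of_nat d #} = proots cp3" unfolding eig by simp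
  have cp3root: "cmod \<mu> \<le> lam" if "poly cp3 \<mu> = 0" for \<mu>
    using ev[unfolded rest] that cp3nz by simp
  obtain \<mu> where "\<mu> \<in> spectrum (blk3 AC n)"
    using spectrum_non_empty[OF B3] n by fastforce
  hence "poly cp3 \<mu> = 0" using spectrum_root_char_poly[OF B3] cp3_def by auto
  from cp3root[OF this] show lam0: "0 \<le> lam" by (meson norm_ge_zero order_trans)
  fix \<mu> assume "poly (char_poly (bmat n E d)) \<mu> = 0"
  hence "\<mu> = 0 \<or> poly cp3 \<mu> = 0" unfolding cpB by simp
  thus "cmod \<mu> \<le> lam" using lam0 cp3root by auto
qed



definition mvr :: "nat \<Rightarrow> (nat \<Rightarrow> nat \<Rightarrow> real) \<Rightarrow> (nat \<Rightarrow> real) \<Rightarrow> nat \<Rightarrow> real" where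
  "mvr n c v = (\<lambda>i. \<Sum>j<n. c i j * v j)"

fun pw :: "nat \<Rightarrow> (nat \<Rightarrow> nat \<Rightarrow> real) \<Rightarrow> nat \<Rightarrow> (nat \<Rightarrow> real) \<Rightarrow> nat \<Rightarrow> real" where
  "pw n c 0 v = v"
| "pw n c (Suc k) v = pw n c k (mvr n c v)"

definition ip :: "nat \<Rightarrow> (nat \<Rightarrow> real) \<Rightarrow> (nat \<Rightarrow> real) \<Rightarrow> real" where
  "ip n u w = (\<Sum>i<n. u i * w i)"

definition cmat :: "nat \<Rightarrow> (nat \<Rightarrow> nat \<Rightarrow> real) \<Rightarrow> complex mat" where
  "cmat n c = mat n n (\<lambda>(i,j). complex_of_real (c i j))"

lemma pw_mat: "i < n \<Longrightarrow> complex_of_real (pw n c k v i) =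
   (\<Sum>j<n. (cmat n c ^\<^sub>m k) $$ (i,j) * complex_of_real (v j))"
proof (induction k arbitrary: v i)
  case 0
  have e: "(1\<^sub>m n :: complex mat) $$ (i,j) * complex_of_real (v j) = (if i = j then complex_of_real (v j) else 0)" if "j < n" for j
    using 0 that by simp
  have "(\<Sum>j<n. (cmat n c ^\<^sub>m 0) $$ (i,j) * complex_of_real (v j)) = (\<Sum>j<n. (if i = j then complex_of_real (v j) else 0))"
    by (intro sum.cong refl, simp add: cmat_def e)
  then show ?case using 0 by simp
next
  case (Suc k)
  have C: "cmat n c \<in> carrier_mat n n" by (simp add: cmat_def)
  have "complex_of_real (pw n c (Suc k) v i) = (\<Sum>l<n. (cmat n c ^\<^sub>m k) $$ (i,l) * complex_of_real (mvr n c v l))"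
    using Suc by simp
  also have "\<dots> = (\<Sum>l<n. \<Sum>j<n. (cmat n c ^\<^sub>m k) $$ (i,l) * (cmat n c $$ (l,j) * complex_of_real (v j)))"
    by (intro sum.cong refl, simp add: mvr_def sum_distrib_left cmat_def)
  also have "\<dots> = (\<Sum>j<n. \<Sum>l<n. (cmat n c ^\<^sub>m k) $$ (i,l) * cmat n c $$ (l,j) * complex_of_real (v j))"
    by (subst sum.swap, simp add: mult.assoc)
  also have "\<dots> = (\<Sum>j<n. (cmat n c ^\<^sub>m Suc k) $$ (i,j) * complex_of_real (v j))"
    using Suc.prems C by (intro sum.cong refl, simp add: scalar_prod_def sum_distrib_right atLeast0LessThan)
  finally show ?case .
qed

lemma pw_add: "pw n c (a + b) v = pw n c a (pw n c b v)"
proof (induction b arbitrary: v)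
  case 0 then show ?case by simp
next
  case (Suc b)
  have "pw n c (a + Suc b) v = pw n c (Suc (a + b)) v" by simp
  also have "\<dots> = pw n c (a + b) (mvr n c v)" by (rule pw.simps(2))
  also have "\<dots> = pw n c a (pw n c b (mvr n c v))" by (rule Suc.IH)
  finally show ?case by simp
qed

lemma pw_comm: "pw n c k (mvr n c w) = mvr n c (pw n c k w)"
proof (induction k arbitrary: w)
  case 0 then show ?case by simp
next
  case (Suc k)
  have "pw n c (Suc k) (mvr n c w) = pw n c k (mvr n c (mvr n c w))" by simp
  also have "\<dots> = mvr n c (pw n c k (mvr n c w))" by (rule Suc.IH)
  finally show ?case by simp
qed

lemma ip_mvr:
  assumes sym: "\<And>i j. i < n \<Longrightarrow> j < n \<Longrightarrow> c i j = c j i"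
  shows "ip n (mvr n c u) w = ip n u (mvr n c w)"
proof -
  have "ip n (mvr n c u) w = (\<Sum>i<n. \<Sum>j<n. c i j * u j * w i)"
    by (simp add: ip_def mvr_def sum_distrib_right)
  also have "\<dots> = (\<Sum>j<n. \<Sum>i<n. c i j * u j * w i)" by (rule sum.swap)
  also have "\<dots> = (\<Sum>j<n. \<Sum>i<n. u j * (c j i * w i))"
    using sym by (intro sum.cong refl, auto simp: algebra_simps)
  also have "\<dots> = ip n u (mvr n c w)"
    by (simp add: ip_def mvr_def sum_distrib_left)
  finally show ?thesis .
qed

lemma ip_pw:
  assumes sym: "\<And>i j. i < n \<Longrightarrow> j < n \<Longrightarrow> c i j = c j i"
  shows "ip n (pw n c k u) w = ip n u (pw n c k w)"
proof (induction k arbitrary: u w)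
  case 0 then show ?case by simp
next
  case (Suc k)
  have "ip n (pw n c (Suc k) u) w = ip n (pw n c k (mvr n c u)) w" by simp
  also have "\<dots> = ip n (mvr n c u) (pw n c k w)" by (rule Suc.IH)
  also have "\<dots> = ip n u (mvr n c (pw n c k w))" by (rule ip_mvr[OF sym])
  also have "\<dots> = ip n u (pw n c (Suc k) w)" by (simp add: pw_comm)
  finally show ?case .
qed

lemma ip_CS: "(ip n u w)\<^sup>2 \<le> ip n u u * ip n w w"
proof -
  have "0 \<le> (\<Sum>i<n. \<Sum>j<n. (u i * w j - u j * w i)\<^sup>2)"
    by (intro sum_nonneg, auto)
  also have "\<dots> = (\<Sum>i<n. \<Sum>j<n. (u i * u i) * (w j * w j) + (u j * u j) * (w i * w i) - 2 * ((u i * w i) * (u j * w j)))"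
    by (intro sum.cong refl, simp add: power2_eq_square algebra_simps)
  also have "\<dots> = (\<Sum>i<n. \<Sum>j<n. (u i * u i) * (w j * w j)) + (\<Sum>i<n. \<Sum>j<n. (u j * u j) * (w i * w i)) - 2 * (\<Sum>i<n. \<Sum>j<n. (u i * w i) * (u j * w j))"
    by (simp only: sum_subtractf sum.distrib sum_distrib_left)
  also have "\<dots> = 2 * (ip n u u * ip n w w) - 2 * (ip n u w)\<^sup>2"
    unfolding ip_def power2_eq_square sum_product
    by (subst sum.swap[of _ "{..<n}" "{..<n}"], simp add: mult.commute)
  finally show ?thesis by simp
qed

lemma ip_nonneg: "0 \<le> ip n u u"
  by (simp add: ip_def sum_nonneg)

lemma pow2_bound:
  assumes sym: "\<And>i j. i < n \<Longrightarrow> j < n \<Longrightarrow> c i j = c j i"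
  shows "ip n (pw n c 1 v) (pw n c 1 v) ^ (2^m) \<le> ip n v v ^ (2^m - 1) * ip n (pw n c (2^m) v) (pw n c (2^m) v)"
proof (induction m)
  case 0 then show ?case by simp
next
  case (Suc m)
  define M :: nat where "M = 2^m"
  have M1: "1 \<le> M" by (simp add: M_def)
  let ?Q = "\<lambda>x. ip n x x"
  have key: "(?Q (pw n c M v))\<^sup>2 \<le> ?Q v * ?Q (pw n c (M + M) v)"
  proof -
    have "?Q (pw n c M v) = ip n v (pw n c M (pw n c M v))" by (rule ip_pw[OF sym])
    also have "\<dots> = ip n v (pw n c (M + M) v)" by (simp add: pw_add)
    finally show ?thesis using ip_CS[of n v "pw n c (M + M) v"] by simp
  qed
  have IH: "?Q (pw n c 1 v) ^ M \<le> ?Q v ^ (M - 1) * ?Q (pw n c M v)" using Suc.IH by (simp add: M_def)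
  have "?Q (pw n c 1 v) ^ (2^Suc m) = (?Q (pw n c 1 v) ^ M)\<^sup>2"
    by (simp add: M_def power_mult[symmetric] mult.commute)
  also have "\<dots> \<le> (?Q v ^ (M - 1) * ?Q (pw n c M v))\<^sup>2"
    using IH by (intro power_mono, auto simp: ip_nonneg)
  also have "\<dots> = ?Q v ^ (2 * (M - 1)) * (?Q (pw n c M v))\<^sup>2"
    by (simp add: power_mult_distrib power_mult[symmetric] mult.commute)
  also have "\<dots> \<le> ?Q v ^ (2 * (M - 1)) * (?Q v * ?Q (pw n c (M + M) v))"
    using key by (intro mult_left_mono, auto simp: ip_nonneg)
  also have "\<dots> = ?Q v ^ (2^Suc m - 1) * ?Q (pw n c (2^Suc m) v)"
  proof -
    have "2 * (M - 1) + 1 = 2 * M - 1" using M1 by linarith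
    hence "2 * (M - 1) + 1 = 2^Suc m - 1" by (simp add: M_def)
    moreover have "M + M = 2^Suc m" by (simp add: M_def)
    ultimately have e: "?Q v ^ (2^Suc m - 1) = ?Q v ^ (2 * (M - 1)) * ?Q v"
      by (metis power_add power_one_right)
    have "?Q v ^ (2^Suc m - 1) * ?Q (pw n c (2^Suc m) v) = ?Q v ^ (2 * (M - 1)) * ?Q v * ?Q (pw n c (M + M) v)"
      by (simp only: e \<open>M + M = 2^Suc m\<close>)
    thus ?thesis by (simp only: mult.assoc)
  qed
  finally show ?case .
qed

lemma trick:
  assumes sym: "\<And>i j. i < n \<Longrightarrow> j < n \<Longrightarrow> c i j = c j i"
    and bnd: "\<And>k i. i < n \<Longrightarrow> \<bar>pw n c k v i\<bar> \<le> K"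
  shows "ip n (mvr n c v) (mvr n c v) \<le> ip n v v"
proof (rule ccontr)
  assume neg: "\<not> ip n (mvr n c v) (mvr n c v) \<le> ip n v v"
  define q where "q = ip n v v"
  define q1 where "q1 = ip n (mvr n c v) (mvr n c v)"
  have gt: "q < q1" using neg by (simp add: q_def q1_def)
  have q0: "0 \<le> q" by (simp add: q_def ip_nonneg)
  have p1: "pw n c 1 v = mvr n c v" by simp
  have W: "ip n (pw n c M v) (pw n c M v) \<le> real n * K\<^sup>2" for M
  proof -
    have "ip n (pw n c M v) (pw n c M v) \<le> (\<Sum>i<n. K\<^sup>2)"
      unfolding ip_def power2_eq_square[symmetric]
    proof (intro sum_mono)
      fix i assume "i \<in> {..<n}"
      hence "\<bar>pw n c M v i\<bar> \<le> K" using bnd by auto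
      hence "\<bar>pw n c M v i\<bar> \<le> \<bar>K\<bar>" using abs_ge_self[of K] by linarith
      thus "(pw n c M v i)\<^sup>2 \<le> K\<^sup>2" by (simp add: abs_le_square_iff)
    qed
    thus ?thesis by simp
  qed
  have P: "q1 ^ (2^m) \<le> q ^ (2^m - 1) * (real n * K\<^sup>2)" for m
  proof -
    have X: "ip n (pw n c 1 v) (pw n c 1 v) ^ (2^m) \<le> ip n v v ^ (2^m - 1) * ip n (pw n c (2^m) v) (pw n c (2^m) v)"
      by (rule pow2_bound[where n=n and c=c and v=v and m=m], rule sym)
    have "q1 ^ (2^m) \<le> q ^ (2^m - 1) * ip n (pw n c (2^m) v) (pw n c (2^m) v)"
      using X unfolding p1 q_def q1_def .
    also have "\<dots> \<le> q ^ (2^m - 1) * (real n * K\<^sup>2)"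
      using W q0 by (intro mult_left_mono, auto)
    finally show ?thesis .
  qed
  show False
  proof (cases "q = 0")
    case True
    from P[of 1] True have "q1 ^ 2 \<le> 0" by simp
    moreover have "0 \<le> q1 ^ 2" by simp
    ultimately have "q1 ^ 2 = 0" by linarith
    hence "q1 = 0" by simp
    with gt True show False by simp
  next
    case False
    hence qp: "0 < q" using q0 by simp
    define x where "x = q1 / q"
    have x1: "1 < x" using gt qp by (simp add: x_def)
    obtain m where m: "real n * K\<^sup>2 / q < x ^ m" using real_arch_pow[OF x1] by blast
    have mm: "m \<le> 2^m" using less_exp[of m] by simp
    have "x ^ m \<le> x ^ (2^m)" using x1 mm by (intro power_increasing) auto
    also have "x ^ (2^m) = q1 ^ (2^m) / (q ^ (2^m - 1) * q)"
    proof -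
      have "q ^ (2^m - 1) * q = q ^ (2^m)"
        by (rule power_minus_mult) simp
      thus ?thesis by (simp add: x_def power_divide)
    qed
    also have "\<dots> \<le> (q ^ (2^m - 1) * (real n * K\<^sup>2)) / (q ^ (2^m - 1) * q)"
      using P[of m] qp by (intro divide_right_mono, auto)
    also have "\<dots> = real n * K\<^sup>2 / q" using qp by simp
    finally show False using m by simp
  qed
qed



definition bfun :: "nat \<Rightarrow> (nat \<Rightarrow> nat \<Rightarrow> bool) \<Rightarrow> nat \<Rightarrow> nat \<Rightarrow> nat \<Rightarrow> real" where
  "bfun n E d i j = (if E i j then 1 else 0) - real d / real n"

lemma bmat_cmat: "bmat n E d = cmat n (bfun n E d)"
  by (simp add: bmat_def cmat_def bfun_def)

lemma quad_bound_rho: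
  assumes ndl: "ndl_graph n d lam E" and n: "2 \<le> n" and rho: "lam < \<rho>"
    and sym: "\<And>i j. i < n \<Longrightarrow> j < n \<Longrightarrow> E i j = E j i"
  shows "ip n (mvr n (bfun n E d) v) (mvr n (bfun n E d) v) \<le> \<rho>\<^sup>2 * ip n v v"
proof -
  note sp = ndl_spec[OF ndl n]
  have rho0: "0 < \<rho>" using sp(1) rho by linarith
  define b where "b = bfun n E d"
  define c where "c = (\<lambda>i j. b i j / \<rho>)"
  have Cc: "cmat n c \<in> carrier_mat n n" by (simp add: cmat_def)
  have Bc: "cmat n b \<in> carrier_mat n n" by (simp add: cmat_def)
  have evb: "cmod \<mu> < 1" if "\<mu> \<in> spectrum (cmat n c)" for \<mu>
  proof -
    from that obtain w where ev: "eigenvector (cmat n c) w \<mu>"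
      unfolding spectrum_def eigenvalue_def by auto
    hence w: "w \<in> carrier_vec n" "w \<noteq> 0\<^sub>v n" and eq: "cmat n c *\<^sub>v w = \<mu> \<cdot>\<^sub>v w"
      unfolding eigenvector_def using Cc by auto
    have "cmat n b *\<^sub>v w = (complex_of_real \<rho> * \<mu>) \<cdot>\<^sub>v w"
    proof (rule eq_vecI)
      fix i assume "i < dim_vec ((complex_of_real \<rho> * \<mu>) \<cdot>\<^sub>v w)"
      hence i: "i < n" using w by auto
      have "(cmat n c *\<^sub>v w) $ i = \<mu> * w $ i" using eq i w by simp
      hence e1: "(\<Sum>j = 0..<n. complex_of_real (b i j / \<rho>) * w $ j) = \<mu> * w $ i"
        using i w by (simp add: cmat_def c_def scalar_prod_def)
      have "(cmat n b *\<^sub>v w) $ i = (\<Sum>j = 0..<n. complex_of_real (b i j) * w $ j)"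
        using i w by (simp add: cmat_def scalar_prod_def)
      also have "\<dots> = complex_of_real \<rho> * (\<Sum>j = 0..<n. complex_of_real (b i j / \<rho>) * w $ j)"
        using rho0 by (simp add: sum_distrib_left)
      also have "\<dots> = ((complex_of_real \<rho> * \<mu>) \<cdot>\<^sub>v w) $ i" using e1 i w by simp
      finally show "(cmat n b *\<^sub>v w) $ i = ((complex_of_real \<rho> * \<mu>) \<cdot>\<^sub>v w) $ i" .
    qed (use w in \<open>auto simp: cmat_def\<close>)
    hence "eigenvector (cmat n b) w (complex_of_real \<rho> * \<mu>)"
      unfolding eigenvector_def using w Bc by auto
    hence "eigenvalue (cmat n b) (complex_of_real \<rho> * \<mu>)" unfolding eigenvalue_def by auto
    hence "poly (char_poly (cmat n b)) (complex_of_real \<rho> * \<mu>) = 0"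
      using eigenvalue_root_char_poly[OF Bc] by simp
    hence "cmod (complex_of_real \<rho> * \<mu>) \<le> lam" using sp(2) unfolding bmat_cmat b_def by blast
    hence "\<rho> * cmod \<mu> \<le> lam" using rho0 by (simp add: norm_mult)
    hence "\<rho> * cmod \<mu> < \<rho> * 1" using rho by simp
    thus ?thesis using rho0 by (simp only: mult_less_cancel_left_pos)
  qed
  have "spectral_radius (cmat n c) \<in> norm ` spectrum (cmat n c)"
    using spectral_radius_mem_max(1)[OF Cc] n by auto
  hence sr: "spectral_radius (cmat n c) < 1" using evb by auto
  obtain cb where cb: "\<And>k. norm_bound (cmat n c ^\<^sub>m k) cb"
    using spectral_radius_jnf_norm_bound_less_1_upper_triangular[OF Cc sr] by blast
  define K where "K = (\<Sum>j<n. cb * \<bar>v j\<bar>)"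
  have bnd: "\<bar>pw n c k v i\<bar> \<le> K" if i: "i < n" for k i
  proof -
    have "\<bar>pw n c k v i\<bar> = cmod (complex_of_real (pw n c k v i))" by simp
    also have "\<dots> = cmod (\<Sum>j<n. (cmat n c ^\<^sub>m k) $$ (i,j) * complex_of_real (v j))"
      using pw_mat[OF i] by simp
    also have "\<dots> \<le> (\<Sum>j<n. cmod ((cmat n c ^\<^sub>m k) $$ (i,j) * complex_of_real (v j)))"
      by (rule norm_sum)
    also have "\<dots> \<le> K" unfolding K_def
    proof (rule sum_mono)
      fix j assume "j \<in> {..<n}"
      hence "cmod ((cmat n c ^\<^sub>m k) $$ (i,j)) \<le> cb" using cb[of k] i Cc
        unfolding norm_bound_def by auto
      thus "cmod ((cmat n c ^\<^sub>m k) $$ (i,j) * complex_of_real (v j)) \<le> cb * \<bar>v j\<bar>"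
        by (simp add: norm_mult mult_right_mono)
    qed
    finally show ?thesis .
  qed
  have symc: "c i j = c j i" if "i < n" "j < n" for i j
    using sym[OF that] by (simp add: c_def b_def bfun_def)
  have tr: "ip n (mvr n c v) (mvr n c v) \<le> ip n v v" by (rule trick[OF symc bnd])
  have mc: "mvr n c v = (\<lambda>i. mvr n b v i / \<rho>)"
    by (simp add: mvr_def c_def sum_divide_distrib)
  have "ip n (mvr n c v) (mvr n c v) = ip n (mvr n b v) (mvr n b v) / \<rho>\<^sup>2"
    unfolding mc ip_def by (simp add: sum_divide_distrib power2_eq_square)
  with tr rho0 show ?thesis unfolding b_def by (simp add: field_simps)
qed

lemma quad_bound:
  assumes ndl: "ndl_graph n d lam E" and n: "2 \<le> n"
  shows "ip n (mvr n (bfun n E d) v) (mvr n (bfun n E d) v) \<le> lam\<^sup>2 * ip n v v"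
proof (rule ccontr)
  have sym: "E i j = E j i" if "i < n" "j < n" for i j
    using ndl unfolding ndl_graph_def graph_on_def by blast
  have lam0: "0 \<le> lam" using ndl_spec[OF ndl n] by simp
  define a where "a = ip n (mvr n (bfun n E d) v) (mvr n (bfun n E d) v)"
  define q where "q = ip n v v"
  assume "\<not> ip n (mvr n (bfun n E d) v) (mvr n (bfun n E d) v) \<le> lam\<^sup>2 * ip n v v"
  hence gt: "lam\<^sup>2 * q < a" by (simp add: a_def q_def)
  have R: "a \<le> \<rho>\<^sup>2 * q" if "lam < \<rho>" for \<rho>
    unfolding a_def q_def by (rule quad_bound_rho[OF ndl n that sym])
  have q0: "0 \<le> q" by (simp add: q_def ip_nonneg)
  show False
  proof (cases "q = 0")
    case True
    with R[of "lam + 1"] gt show False by simp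
  next
    case False
    hence qp: "0 < q" using q0 by simp
    have "lam\<^sup>2 < a / q" using gt qp by (simp add: field_simps)
    hence l: "lam < sqrt (a / q)" using lam0 by (metis real_less_rsqrt)
    define \<rho> where "\<rho> = (lam + sqrt (a / q)) / 2"
    have r1: "lam < \<rho>" "\<rho> < sqrt (a / q)" using l by (auto simp: \<rho>_def)
    have "0 \<le> \<rho>" using r1 lam0 by simp
    hence "\<rho>\<^sup>2 < (sqrt (a / q))\<^sup>2" using r1(2) by (intro power_strict_mono) auto
    also have "\<dots> = a / q" using gt lam0 qp
      by (intro real_sqrt_pow2) (smt (verit) divide_nonneg_pos mult_nonneg_nonneg zero_le_power2)
    finally have "\<rho>\<^sup>2 * q < a" using qp by (simp add: field_simps)
    with R[OF r1(1)] show False by simp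
  qed
qed

lemma mixing:
  assumes ndl: "ndl_graph n d lam E" and n: "2 \<le> n"
    and S: "S \<subseteq> {..<n}" and T: "T \<subseteq> {..<n}"
  shows "\<bar>real (\<Sum>i\<in>S. card {j\<in>T. E i j}) - real d * card S * card T / n\<bar>
           \<le> lam * sqrt (card S * card T)"
proof -
  define u where "u = (\<lambda>i. if i \<in> S then 1 else 0 :: real)"
  define v where "v = (\<lambda>i. if i \<in> T then 1 else 0 :: real)"
  define b where "b = bfun n E d"
  have lam0: "0 \<le> lam" using ndl_spec[OF ndl n] by simp
  have finS: "finite S" and finT: "finite T" using S T finite_subset by auto
  have ipu: "ip n u u = card S"
  proof -
    have "ip n u u = (\<Sum>i<n. if i \<in> S then 1 else 0)" unfolding ip_def u_def by (intro sum.cong) auto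
    also have "\<dots> = card ({..<n} \<inter> S)" by (simp add: sum.If_cases)
    finally show ?thesis using S by (simp add: Int_absorb1 Int_absorb2)
  qed
  have ipv: "ip n v v = card T"
  proof -
    have "ip n v v = (\<Sum>i<n. if i \<in> T then 1 else 0)" unfolding ip_def v_def by (intro sum.cong) auto
    also have "\<dots> = card ({..<n} \<inter> T)" by (simp add: sum.If_cases)
    finally show ?thesis using T by (simp add: Int_absorb1 Int_absorb2)
  qed
  have mv: "mvr n b v i = real (card {j\<in>T. E i j}) - real d * card T / n" for i
  proof -
    have "mvr n b v i = (\<Sum>j<n. if j \<in> T then b i j else 0)" unfolding mvr_def v_def by (intro sum.cong) auto
    also have "\<dots> = (\<Sum>j\<in>T. b i j)" using T by (simp add: sum.If_cases Int_absorb1 Int_absorb2)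
    also have "\<dots> = (\<Sum>j\<in>T. (if E i j then 1 else 0)) - (\<Sum>j\<in>T. real d / real n)"
      by (simp add: b_def bfun_def sum_subtractf)
    also have "(\<Sum>j\<in>T. (if E i j then 1 else 0 :: real)) = real (card {j\<in>T. E i j})"
      using finT by (simp add: sum.If_cases Int_def conj_commute)
    finally show ?thesis by simp
  qed
  have ipm: "ip n u (mvr n b v) = real (\<Sum>i\<in>S. card {j\<in>T. E i j}) - real d * card S * card T / n"
  proof -
    have "ip n u (mvr n b v) = (\<Sum>i<n. if i \<in> S then mvr n b v i else 0)" unfolding ip_def u_def by (intro sum.cong) auto
    also have "\<dots> = (\<Sum>i\<in>S. mvr n b v i)" using S by (simp add: sum.If_cases Int_absorb1 Int_absorb2)
    also have "\<dots> = (\<Sum>i\<in>S. real (card {j\<in>T. E i j})) - (\<Sum>i\<in>S. real d * card T / n)"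
      unfolding mv by (simp add: sum_subtractf)
    finally show ?thesis by simp
  qed
  have "(ip n u (mvr n b v))\<^sup>2 \<le> ip n u u * ip n (mvr n b v) (mvr n b v)" by (rule ip_CS)
  also have "\<dots> \<le> ip n u u * (lam\<^sup>2 * ip n v v)"
    using quad_bound[OF ndl n, of v] by (intro mult_left_mono) (auto simp: b_def ip_nonneg)
  also have "\<dots> = (lam * sqrt (card S * card T))\<^sup>2"
    by (simp add: ipu ipv power_mult_distrib)
  finally have "(ip n u (mvr n b v))\<^sup>2 \<le> (lam * sqrt (card S * card T))\<^sup>2" .
  hence "\<bar>ip n u (mvr n b v)\<bar> \<le> \<bar>lam * sqrt (card S * card T)\<bar>" by (simp add: abs_le_square_iff)
  thus ?thesis using lam0 by (simp add: ipm)
qed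



fun valid :: "(nat \<Rightarrow> nat \<Rightarrow> bool) \<Rightarrow> nat set \<Rightarrow> (nat \<times> nat) list \<Rightarrow> bool" where
  "valid G X [] = True"
| "valid G X (e # ps) = (snd e \<in> X \<and> valid G {c \<in> X. \<not> G (fst e) c} ps)"

definition Seq :: "(nat \<times> nat) set \<Rightarrow> (nat \<Rightarrow> nat \<Rightarrow> bool) \<Rightarrow> nat \<Rightarrow> nat set \<Rightarrow> (nat \<times> nat) list set" where
  "Seq EF G r X = {ps. length ps = r \<and> set ps \<subseteq> EF \<and> valid G X ps}"

definition Lf :: "real \<Rightarrow> nat \<Rightarrow> real" where
  "Lf \<delta> x = (if x = 0 then 0 else 1 + ln (real x) / \<delta>)"

lemma Seq_0: "Seq EF G 0 X = {[]}" by (auto simp: Seq_def)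

lemma Seq_Suc: "Seq EF G (Suc r) X \<subseteq> (\<Union>e\<in>{e\<in>EF. snd e \<in> X}. (\<lambda>ps. e # ps) ` Seq EF G r {c \<in> X. \<not> G (fst e) c})"
proof
  fix ps assume "ps \<in> Seq EF G (Suc r) X"
  then obtain e qs where ps: "ps = e # qs" "length qs = r" "e \<in> EF" "set qs \<subseteq> EF"
    "snd e \<in> X" "valid G {c \<in> X. \<not> G (fst e) c} qs"
    unfolding Seq_def by (cases ps) auto
  thus "ps \<in> (\<Union>e\<in>{e\<in>EF. snd e \<in> X}. (\<lambda>ps. e # ps) ` Seq EF G r {c \<in> X. \<not> G (fst e) c})"
  proof (intro UN_I)
    show "e \<in> {e\<in>EF. snd e \<in> X}" using ps by auto
    show "ps \<in> (\<lambda>ps. e # ps) ` Seq EF G r {c \<in> X. \<not> G (fst e) c}"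
      using ps unfolding Seq_def by auto
  qed
qed

lemma finite_Seq: "finite EF \<Longrightarrow> finite (Seq EF G r X)"
proof -
  assume f: "finite EF"
  have "Seq EF G r X \<subseteq> {ps. set ps \<subseteq> EF \<and> length ps = r}" by (auto simp: Seq_def)
  thus ?thesis using finite_lists_length_eq[OF f, of r] finite_subset by blast
qed

lemma Lf_nonneg: "0 < \<delta> \<Longrightarrow> 0 \<le> Lf \<delta> x"
  by (auto simp: Lf_def)

lemma Lf_ge1: "0 < \<delta> \<Longrightarrow> x \<noteq> 0 \<Longrightarrow> 1 \<le> Lf \<delta> x"
  by (auto simp: Lf_def)

lemma Lf_mono: "0 < \<delta> \<Longrightarrow> y \<le> x \<Longrightarrow> Lf \<delta> y \<le> Lf \<delta> x"
  by (auto simp: Lf_def divide_right_mono)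

lemma Lf_shrink:
  assumes d: "0 < \<delta>" "\<delta> < 1" and x: "x \<noteq> 0" and y: "real y \<le> (1 - \<delta>) * real x"
  shows "Lf \<delta> y \<le> Lf \<delta> x - 1"
proof (cases "y = 0")
  case True thus ?thesis using Lf_ge1[OF d(1) x] by (simp add: Lf_def)
next
  case False
  have "ln (real y) \<le> ln ((1 - \<delta>) * real x)" using False y by (intro ln_mono) auto
  also have "\<dots> = ln (1 - \<delta>) + ln (real x)" using d x by (simp add: ln_mult)
  also have "ln (1 - \<delta>) \<le> - \<delta>" using ln_le_minus_one[of "1 - \<delta>"] d by simp
  finally have "ln (real y) \<le> ln (real x) - \<delta>" by simp
  hence "ln (real y) / \<delta> \<le> (ln (real x) - \<delta>) / \<delta>" using d by (intro divide_right_mono) auto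
  also have "\<dots> = ln (real x) / \<delta> - 1" using d by (simp add: field_simps)
  finally show ?thesis using False x by (simp add: Lf_def)
qed

lemma main_bound:
  fixes \<delta> c N :: real
  assumes finEF: "finite EF" and EFn: "EF \<subseteq> {..<n} \<times> {..<n}"
    and cardEF: "real (card EF) \<le> N"
    and d: "0 < \<delta>" "\<delta> < 1" and c: "0 < c" "c \<le> 1"
    and bad: "\<And>X. X \<subseteq> {..<n} \<Longrightarrow>
       real (card {e\<in>EF. snd e \<in> X \<and> real (card {b\<in>X. G (fst e) b}) \<le> \<delta> * real (card X)}) \<le> c * N"
  shows "X \<subseteq> {..<n} \<Longrightarrow> real (card (Seq EF G r X)) \<le> 2^r * N^r * c powr (real r - Lf \<delta> (card X))"
proof (induction r arbitrary: X)
  case 0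
  have "1 \<le> c powr (0 - Lf \<delta> (card X))"
  proof -
    have "c powr 0 \<le> c powr (0 - Lf \<delta> (card X))"
      using c Lf_nonneg[OF d(1)] by (intro powr_mono') auto
    thus ?thesis using c by simp
  qed
  thus ?case by (simp add: Seq_0)
next
  case (Suc r)
  have N0: "0 \<le> N" using cardEF by (meson of_nat_0_le_iff order_trans)
  define R where "R = 2^r * N^r"
  have R0: "0 \<le> R" using N0 by (simp add: R_def)
  show ?case
  proof (cases "X = {}")
    case True
    hence "Seq EF G (Suc r) X = {}" using Seq_Suc[of EF G r X] by auto
    thus ?thesis using N0 by simp
  next
    case False
    have finX: "finite X" using Suc.prems finite_subset by blast
    hence x0: "card X \<noteq> 0" using False by simp
    define L where "L = Lf \<delta> (card X)"
    define A where "A = {e\<in>EF. snd e \<in> X}"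
    define isbad where "isbad = (\<lambda>e::nat\<times>nat. real (card {b\<in>X. G (fst e) b}) \<le> \<delta> * real (card X))"
    define Bd where "Bd = {e\<in>A. isbad e}"
    define Gd where "Gd = {e\<in>A. \<not> isbad e}"
    define Xe where "Xe = (\<lambda>e::nat\<times>nat. {c \<in> X. \<not> G (fst e) c})"
    have finA: "finite A" using finEF by (simp add: A_def)
    have XeS: "Xe e \<subseteq> {..<n}" for e using Suc.prems by (auto simp: Xe_def)
    have IH: "real (card (Seq EF G r (Xe e))) \<le> R * c powr (real r - Lf \<delta> (card (Xe e)))" for e
      using Suc.IH[OF XeS] by (simp add: R_def)
    have cardXe: "real (card (Xe e)) = real (card X) - real (card {b\<in>X. G (fst e) b})" for e
    proof -
      have "Xe e = X - {b\<in>X. G (fst e) b}" by (auto simp: Xe_def)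
      hence "card (Xe e) = card X - card {b\<in>X. G (fst e) b}" using finX by (simp add: card_Diff_subset)
      moreover have "card {b\<in>X. G (fst e) b} \<le> card X" using finX by (intro card_mono) auto
      ultimately show ?thesis by simp
    qed
    have good_b: "real (card (Seq EF G r (Xe e))) \<le> R * c powr (real (Suc r) - L)" if "e \<in> Gd" for e
    proof -
      have "\<not> isbad e" using that by (simp add: Gd_def)
      hence "real (card (Xe e)) \<le> (1 - \<delta>) * real (card X)"
        unfolding cardXe isbad_def by (simp add: algebra_simps)
      hence "Lf \<delta> (card (Xe e)) \<le> L - 1" unfolding L_def by (rule Lf_shrink[OF d x0])
      hence "c powr (real r - Lf \<delta> (card (Xe e))) \<le> c powr (real (Suc r) - L)"
        using c by (intro powr_mono') auto
      thus ?thesis using IH[of e] R0 by (meson mult_left_mono order_trans)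
    qed
    have bad_b: "real (card (Seq EF G r (Xe e))) \<le> R * c powr (real r - L)" for e
    proof -
      have "card (Xe e) \<le> card X" using finX by (intro card_mono) (auto simp: Xe_def)
      hence "Lf \<delta> (card (Xe e)) \<le> L" unfolding L_def by (rule Lf_mono[OF d(1)])
      hence "c powr (real r - Lf \<delta> (card (Xe e))) \<le> c powr (real r - L)"
        using c by (intro powr_mono') auto
      thus ?thesis using IH[of e] R0 by (meson mult_left_mono order_trans)
    qed
    have "card (Seq EF G (Suc r) X) \<le> card (\<Union>e\<in>A. (\<lambda>ps. e # ps) ` Seq EF G r (Xe e))"
      using Seq_Suc[of EF G r X] finA finite_Seq[OF finEF]
      by (intro card_mono) (auto simp: A_def Xe_def)
    also have "\<dots> \<le> (\<Sum>e\<in>A. card ((\<lambda>ps. e # ps) ` Seq EF G r (Xe e)))"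
      by (rule card_UN_le[OF finA])
    also have "\<dots> \<le> (\<Sum>e\<in>A. card (Seq EF G r (Xe e)))"
      by (intro sum_mono card_image_le finite_Seq[OF finEF])
    finally have "card (Seq EF G (Suc r) X) \<le> (\<Sum>e\<in>A. card (Seq EF G r (Xe e)))" .
    hence "real (card (Seq EF G (Suc r) X)) \<le> (\<Sum>e\<in>A. real (card (Seq EF G r (Xe e))))"
      unfolding of_nat_sum[symmetric] by (rule of_nat_mono)
    also have "\<dots> = (\<Sum>e\<in>Bd. real (card (Seq EF G r (Xe e)))) + (\<Sum>e\<in>Gd. real (card (Seq EF G r (Xe e))))"
    proof -
      have "A = Bd \<union> Gd" "Bd \<inter> Gd = {}" by (auto simp: Bd_def Gd_def)
      moreover have "finite Bd" "finite Gd" using finA by (auto simp: Bd_def Gd_def)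
      ultimately show ?thesis by (simp add: sum.union_disjoint)
    qed
    also have "\<dots> \<le> (\<Sum>e\<in>Bd. R * c powr (real r - L)) + (\<Sum>e\<in>Gd. R * c powr (real (Suc r) - L))"
      by (intro add_mono sum_mono bad_b good_b) auto
    also have "\<dots> = real (card Bd) * (R * c powr (real r - L)) + real (card Gd) * (R * c powr (real (Suc r) - L))"
      by simp
    also have "\<dots> \<le> (c * N) * (R * c powr (real r - L)) + N * (R * c powr (real (Suc r) - L))"
    proof (intro add_mono mult_right_mono)
      have "Bd = {e\<in>EF. snd e \<in> X \<and> real (card {b\<in>X. G (fst e) b}) \<le> \<delta> * real (card X)}"
        by (auto simp: Bd_def A_def isbad_def)
      thus "real (card Bd) \<le> c * N" using bad[OF Suc.prems] by simp
      have "card Gd \<le> card EF" using finEF by (intro card_mono) (auto simp: Gd_def A_def)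
      thus "real (card Gd) \<le> N" using cardEF by linarith
    qed (use R0 in auto)
    also have "\<dots> = 2^(Suc r) * N^(Suc r) * c powr (real (Suc r) - L)"
    proof -
      have "c * c powr (real r - L) = c powr (real (Suc r) - L)"
      proof -
        have "real (Suc r) - L = 1 + (real r - L)" by simp
        hence "c powr (real (Suc r) - L) = c powr (1 + (real r - L))" by (simp only:)
        also have "\<dots> = c powr 1 * c powr (real r - L)" by (rule powr_add)
        finally show ?thesis using c by simp
      qed
      hence "(c * N) * (R * c powr (real r - L)) = N * (R * c powr (real (Suc r) - L))"
        by (metis mult.assoc mult.left_commute)
      thus ?thesis by (simp add: R_def algebra_simps)
    qed
    finally show ?thesis by (simp add: L_def)
  qed
qed



lemma valid_of:
  assumes "\<And>j. j < length ps \<Longrightarrow> snd (ps ! j) \<in> X"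
    and "\<And>i j. i < j \<Longrightarrow> j < length ps \<Longrightarrow> \<not> G (fst (ps ! i)) (snd (ps ! j))"
  shows "valid G X ps"
  using assms
proof (induction ps arbitrary: X)
  case Nil then show ?case by simp
next
  case (Cons e ps)
  have "snd e \<in> X" using Cons.prems(1)[of 0] by simp
  moreover have "valid G {c \<in> X. \<not> G (fst e) c} ps"
  proof (rule Cons.IH)
    fix j assume j: "j < length ps"
    have "snd (ps ! j) \<in> X" using Cons.prems(1)[of "Suc j"] j by simp
    moreover have "\<not> G (fst e) (snd (ps ! j))" using Cons.prems(2)[of 0 "Suc j"] j by simp
    ultimately show "snd (ps ! j) \<in> {c \<in> X. \<not> G (fst e) c}" by simp
  next
    fix i j assume "i < j" "j < length ps"
    thus "\<not> G (fst (ps ! i)) (snd (ps ! j))" using Cons.prems(2)[of "Suc i" "Suc j"] by simp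
  qed
  ultimately show ?case by simp
qed

lemma card_EF:
  assumes deg: "\<And>v. v < n \<Longrightarrow> degree n F v = dF"
  shows "card {(a,b). a < n \<and> b < n \<and> F a b} = dF * n"
proof -
  have "{(a,b). a < n \<and> b < n \<and> F a b} = (SIGMA a:{..<n}. {u. u < n \<and> F a u})" by auto
  hence "card {(a,b). a < n \<and> b < n \<and> F a b} = (\<Sum>a<n. card {u. u < n \<and> F a u})" by simp
  also have "\<dots> = (\<Sum>a<n. dF)" using deg by (intro sum.cong) (auto simp: degree_def)
  finally show ?thesis by simp
qed

lemma bad_bound:
  fixes n dF dG :: nat and lF lG :: real
  assumes mixF: "\<And>S T. S \<subseteq> {..<n} \<Longrightarrow> T \<subseteq> {..<n} \<Longrightarrow>
      \<bar>real (\<Sum>i\<in>S. card {j\<in>T. F i j}) - real dF * card S * card T / n\<bar> \<le> lF * sqrt (card S * card T)"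
    and mixG: "\<And>S T. S \<subseteq> {..<n} \<Longrightarrow> T \<subseteq> {..<n} \<Longrightarrow>
      \<bar>real (\<Sum>i\<in>S. card {j\<in>T. G i j}) - real dG * card S * card T / n\<bar> \<le> lG * sqrt (card S * card T)"
    and lF0: "0 \<le> lF" and lG0: "0 \<le> lG" and n0: "0 < n" and dG0: "0 < dG" and dF0: "0 < dF"
    and X: "X \<subseteq> {..<n}"
  shows "real (card {e\<in>{(a,b). a < n \<and> b < n \<and> F a b}. snd e \<in> X \<and>
            real (card {b\<in>X. G (fst e) b}) \<le> (real dG / (2 * real n)) * real (card X)})
         \<le> (4 * lG\<^sup>2 / (real dG)\<^sup>2 + 2 * lF * lG / (real dF * real dG)) * (real dF * real n)"
proof -
  define \<delta> where "\<delta> = real dG / (2 * real n)"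
  define Sb where "Sb = {a\<in>{..<n}. real (card {b\<in>X. G a b}) \<le> \<delta> * real (card X)}"
  define s where "s = real (card Sb)"
  define x where "x = real (card X)"
  define t where "t = sqrt (s * x)"
  have Sb: "Sb \<subseteq> {..<n}" by (auto simp: Sb_def)
  have finSb: "finite Sb" using Sb finite_subset by blast
  have finX: "finite X" using X finite_subset by blast
  have s0: "0 \<le> s" and x0: "0 \<le> x" by (auto simp: s_def x_def)
  have t0: "0 \<le> t" using s0 x0 by (simp add: t_def)
  have tt: "t\<^sup>2 = s * x" using s0 x0 by (simp add: t_def)
  have eq: "{e\<in>{(a,b). a < n \<and> b < n \<and> F a b}. snd e \<in> X \<and>
            real (card {b\<in>X. G (fst e) b}) \<le> (real dG / (2 * real n)) * real (card X)}
        = (SIGMA a:Sb. {b\<in>X. F a b})" using X by (auto simp: Sb_def \<delta>_def)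
  have cardB: "card (SIGMA a:Sb. {b\<in>X. F a b}) = (\<Sum>i\<in>Sb. card {j\<in>X. F i j})"
    using finSb finX by simp
  have upG: "real (\<Sum>i\<in>Sb. card {j\<in>X. G i j}) \<le> s * (\<delta> * x)"
  proof -
    have "real (\<Sum>i\<in>Sb. card {j\<in>X. G i j}) = (\<Sum>i\<in>Sb. real (card {j\<in>X. G i j}))" by simp
    also have "\<dots> \<le> (\<Sum>i\<in>Sb. \<delta> * x)" by (intro sum_mono) (auto simp: Sb_def x_def)
    finally show ?thesis by (simp add: s_def)
  qed
  have loG: "real dG * s * x / n - lG * t \<le> real (\<Sum>i\<in>Sb. card {j\<in>X. G i j})"
    using mixG[OF Sb X] by (simp add: s_def x_def t_def)
  have A: "real dG * (s * x) / (2 * n) \<le> lG * t"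
  proof -
    have "real dG * s * x / n - lG * t \<le> s * (\<delta> * x)" using loG upG by linarith
    moreover have "s * (\<delta> * x) = real dG * (s * x) / (2 * n)" by (simp add: \<delta>_def field_simps)
    moreover have "real dG * s * x / n = 2 * (real dG * (s * x) / (2 * n))" using n0 by (simp add: field_simps)
    moreover have "\<And>a b y. a - y \<le> b \<Longrightarrow> a = 2 * b \<Longrightarrow> b \<le> (y::real)" by linarith
    ultimately show ?thesis by metis
  qed
  have tb: "t \<le> 2 * n * lG / dG"
  proof (cases "t = 0")
    case True thus ?thesis using lG0 by simp
  next
    case False
    hence tp: "0 < t" using t0 by simp
    have E: "real dG * (s * x) / (2 * n) = t * (real dG * t / (2 * n))"
      unfolding tt[symmetric] by (simp add: power2_eq_square)
    from A have "t * (real dG * t / (2 * n)) \<le> lG * t" unfolding E .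
    hence "t * (real dG * t / (2 * n)) \<le> t * lG" by (simp only: mult.commute[of lG t])
    hence "real dG * t / (2 * n) \<le> lG" using mult_le_cancel_left_pos[OF tp] by blast
    thus ?thesis using n0 dG0 by (simp add: field_simps)
  qed
  have upF: "real (\<Sum>i\<in>Sb. card {j\<in>X. F i j}) \<le> real dF * (s * x) / n + lF * t"
    using mixF[OF Sb X] by (simp add: s_def x_def t_def)
  have "s * x \<le> (2 * n * lG / dG)\<^sup>2" using tb t0 tt by (metis power_mono)
  hence "real dF * (s * x) / n \<le> real dF * (2 * n * lG / dG)\<^sup>2 / n"
    using n0 by (intro divide_right_mono mult_left_mono) auto
  also have "\<dots> = 4 * lG\<^sup>2 / (real dG)\<^sup>2 * (real dF * real n)"
    using n0 by (simp add: power2_eq_square field_simps)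
  finally have p1: "real dF * (s * x) / n \<le> 4 * lG\<^sup>2 / (real dG)\<^sup>2 * (real dF * real n)" .
  have "lF * t \<le> lF * (2 * n * lG / dG)" using tb lF0 by (intro mult_left_mono)
  also have "\<dots> = 2 * lF * lG / (real dF * real dG) * (real dF * real n)"
    using dF0 by (simp add: field_simps)
  finally have p2: "lF * t \<le> 2 * lF * lG / (real dF * real dG) * (real dF * real n)" .
  show ?thesis unfolding eq cardB using upF p1 p2 by (simp add: algebra_simps)
qed



theorem lemma2p8:
  fixes s n dF dG :: nat and lF lG :: real and F G :: "nat \<Rightarrow> nat \<Rightarrow> bool"
  assumes "s \<ge> 3" and "n \<ge> 3"
    and "dF \<ge> 1" and "dG \<ge> 1"
    and "ndl_graph n dF lF F" and "ndl_graph n dG lG G"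
    and "Hs_free n s F G"
  shows "\<exists>A. digraph_on (dF * n) A \<and> Ts_free (dF * n) s A \<and>
    (\<forall>k::nat. real k \<ge> 4 * real n * ln (real n) / real dG \<longrightarrow>
       real (fwi (dF * n) A k) \<le>
         16 ^ k * rpow (max (lG\<^sup>2 / (real dG)\<^sup>2) (lF * lG / (real dF * real dG)))
                       (real k - 4 * real n * ln (real n) / real dG)
           * (real (dF * n)) ^ k)"
proof -
  have n2: "2 \<le> n" using assms(2) by simp
  have n0: "0 < n" using n2 by simp
  note ndlF = assms(5) and ndlG = assms(6) and Hs = assms(7)
  have gF: "graph_on n F" and degF: "\<And>v. v < n \<Longrightarrow> degree n F v = dF"
    using ndlF unfolding ndl_graph_def by auto
  have gG: "graph_on n G" and degG: "\<And>v. v < n \<Longrightarrow> degree n G v = dG"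
    using ndlG unfolding ndl_graph_def by auto
  have lF0: "0 \<le> lF" using ndl_spec(1)[OF ndlF n2] .
  have lG0: "0 \<le> lG" using ndl_spec(1)[OF ndlG n2] .
  note mixF = mixing[OF ndlF n2] and mixG = mixing[OF ndlG n2]
  have Fn: "a < n \<and> b < n" if "F a b" for a b using gF that unfolding graph_on_def by blast
  have disj: "\<not> G a b" if "F a b" for a b
  proof
    assume "G a b"
    hence "\<exists>a' b' :: nat \<Rightarrow> nat. (\<forall>i<s. a' i < n \<and> b' i < n) \<and> (\<forall>i<s. F (a' i) (b' i)) \<and>
      (\<forall>i j. i < j \<and> j < s \<longrightarrow> G (a' i) (b' j))"
      using that Fn[OF that] by (intro exI[of _ "\<lambda>_. a"] exI[of _ "\<lambda>_. b"]) auto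
    thus False using Hs unfolding Hs_free_def by blast
  qed
  have dGn: "dG \<le> n"
  proof -
    have "card {u. u < n \<and> G 0 u} \<le> card {..<n}" by (intro card_mono) auto
    thus ?thesis using degG[OF n0] by (simp add: degree_def)
  qed
  obtain b0 where b0: "b0 < n" "F 0 b0"
  proof -
    have "card {u. u < n \<and> F 0 u} \<noteq> 0" using degF[OF n0] assms(3) by (simp add: degree_def)
    hence "{u. u < n \<and> F 0 u} \<noteq> {}" by (metis card.empty)
    thus ?thesis using that by blast
  qed
  have lGpos: "0 < lG"
  proof -
    have E: "{j. j = b0 \<and> G 0 j} = {}" using disj[OF b0(2)] by auto
    have "\<bar>0 - real dG * 1 * 1 / n\<bar> \<le> lG * sqrt (1 * 1)"
      using mixG[of "{0}" "{b0}"] b0 n0 by (simp add: E)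
    moreover have "0 < real dG / n" using assms(4) n0 by simp
    ultimately show ?thesis by simp
  qed
  define N where "N = dF * n"
  define EF where "EF = {(a,b). a < n \<and> b < n \<and> F a b}"
  have cardEF: "card EF = N" unfolding EF_def N_def by (rule card_EF[OF degF])
  have EFn: "EF \<subseteq> {..<n} \<times> {..<n}" by (auto simp: EF_def)
  have finEF: "finite EF" using EFn finite_subset by blast
  obtain \<phi> where bij: "bij_betw \<phi> {0..<N} EF"
    using finite_same_card_bij[of "{0..<N}" EF] finEF cardEF by auto
  have \<phi>EF: "\<phi> u \<in> EF" if "u < N" for u using bij that by (auto simp: bij_betw_def)
  have \<phi>F: "fst (\<phi> u) < n \<and> snd (\<phi> u) < n \<and> F (fst (\<phi> u)) (snd (\<phi> u))" if "u < N" for u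
    using \<phi>EF[OF that] by (cases "\<phi> u") (auto simp: EF_def)
  define D where "D = (\<lambda>u v. u < N \<and> v < N \<and> G (fst (\<phi> u)) (snd (\<phi> v)))"
  have dig: "digraph_on N D"
    unfolding digraph_on_def D_def
  proof (intro conjI allI impI notI)
    fix v assume "v < N \<and> v < N \<and> G (fst (\<phi> v)) (snd (\<phi> v))"
    moreover hence "F (fst (\<phi> v)) (snd (\<phi> v))" using \<phi>F by blast
    ultimately show False using disj by blast
  qed auto
  have tsf: "Ts_free N s D"
    unfolding Ts_free_def
  proof
    assume "\<exists>f. inj_on f {0..<s} \<and> (\<forall>i<s. f i < N) \<and> (\<forall>i j. i < j \<and> j < s \<longrightarrow> D (f i) (f j))"
    then obtain f where f: "\<And>i. i < s \<Longrightarrow> f i < N" "\<And>i j. i < j \<Longrightarrow> j < s \<Longrightarrow> D (f i) (f j)" by blast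
    have "\<exists>a' b' :: nat \<Rightarrow> nat. (\<forall>i<s. a' i < n \<and> b' i < n) \<and> (\<forall>i<s. F (a' i) (b' i)) \<and>
      (\<forall>i j. i < j \<and> j < s \<longrightarrow> G (a' i) (b' j))"
    proof (rule exI[of _ "\<lambda>i. fst (\<phi> (f i))"], rule exI[of _ "\<lambda>i. snd (\<phi> (f i))"], intro conjI)
      show "\<forall>i<s. fst (\<phi> (f i)) < n \<and> snd (\<phi> (f i)) < n" using f(1) \<phi>F by blast
      show "\<forall>i<s. F (fst (\<phi> (f i))) (snd (\<phi> (f i)))" using f(1) \<phi>F by blast
      show "\<forall>i j. i < j \<and> j < s \<longrightarrow> G (fst (\<phi> (f i))) (snd (\<phi> (f j)))"
        using f(2) unfolding D_def by blast
    qed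
    thus False using Hs unfolding Hs_free_def by blast
  qed
  have fwi_le: "fwi N D k \<le> card (Seq EF G k {..<n})" for k
    unfolding fwi_def
  proof (rule card_inj_on_le[where f="map \<phi>"])
    show "inj_on (map \<phi>) {xs. length xs = k \<and> set xs \<subseteq> {0..<N} \<and>
        (\<forall>i j. i < j \<and> j < k \<longrightarrow> \<not> D (xs ! i) (xs ! j))}"
    proof (rule inj_onI)
      fix xs ys assume xs: "xs \<in> {xs. length xs = k \<and> set xs \<subseteq> {0..<N} \<and>
        (\<forall>i j. i < j \<and> j < k \<longrightarrow> \<not> D (xs ! i) (xs ! j))}"
        and ys: "ys \<in> {xs. length xs = k \<and> set xs \<subseteq> {0..<N} \<and>
        (\<forall>i j. i < j \<and> j < k \<longrightarrow> \<not> D (xs ! i) (xs ! j))}" and eq: "map \<phi> xs = map \<phi> ys"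
      have "inj_on \<phi> (set xs \<union> set ys)"
        using bij_betw_imp_inj_on[OF bij] xs ys by (auto intro: inj_on_subset)
      thus "xs = ys" using map_inj_on[OF eq] by blast
    qed
    show "map \<phi> ` {xs. length xs = k \<and> set xs \<subseteq> {0..<N} \<and>
        (\<forall>i j. i < j \<and> j < k \<longrightarrow> \<not> D (xs ! i) (xs ! j))} \<subseteq> Seq EF G k {..<n}"
    proof
      fix ps assume "ps \<in> map \<phi> ` {xs. length xs = k \<and> set xs \<subseteq> {0..<N} \<and>
        (\<forall>i j. i < j \<and> j < k \<longrightarrow> \<not> D (xs ! i) (xs ! j))}"
      then obtain xs where ps: "ps = map \<phi> xs" and len: "length xs = k" and sxs: "set xs \<subseteq> {0..<N}"
        and nd: "\<And>i j. i < j \<Longrightarrow> j < k \<Longrightarrow> \<not> D (xs ! i) (xs ! j)" by blast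
      have xsN: "xs ! j < N" if "j < k" for j using sxs that len by (auto simp: set_conv_nth)
      have "set ps \<subseteq> EF" using ps sxs \<phi>EF by auto
      moreover have "valid G {..<n} ps"
      proof (rule valid_of)
        fix j assume "j < length ps"
        hence "j < k" using ps len by simp
        thus "snd (ps ! j) \<in> {..<n}" using ps len xsN \<phi>F by auto
      next
        fix i j assume ij: "i < j" "j < length ps"
        hence "j < k" using ps len by simp
        hence "\<not> D (xs ! i) (xs ! j)" using nd ij by blast
        thus "\<not> G (fst (ps ! i)) (snd (ps ! j))"
          using xsN[of i] xsN[of j] ij \<open>j < k\<close> ps len by (simp add: D_def)
      qed
      ultimately show "ps \<in> Seq EF G k {..<n}" using ps len by (simp add: Seq_def)
    qed
    show "finite (Seq EF G k {..<n})" by (rule finite_Seq[OF finEF])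
  qed
  define \<eta> where "\<eta> = max (lG\<^sup>2 / (real dG)\<^sup>2) (lF * lG / (real dF * real dG))"
  define w where "w = 4 * real n * ln (real n) / real dG"
  define c where "c = 4 * lG\<^sup>2 / (real dG)\<^sup>2 + 2 * lF * lG / (real dF * real dG)"
  define \<delta> where "\<delta> = real dG / (2 * real n)"
  have dG0: "0 < real dG" using assms(4) by simp
  have dF0: "0 < real dF" using assms(3) by simp
  have eta_pos: "0 < \<eta>"
  proof -
    have "0 < lG\<^sup>2 / (real dG)\<^sup>2" using lGpos dG0 by simp
    thus ?thesis unfolding \<eta>_def by simp
  qed
  have c6: "c \<le> 6 * \<eta>"
  proof -
    have "lG\<^sup>2 / (real dG)\<^sup>2 \<le> \<eta>" "lF * lG / (real dF * real dG) \<le> \<eta>" unfolding \<eta>_def by auto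
    moreover have "2 * lF * lG / (real dF * real dG) = 2 * (lF * lG / (real dF * real dG))" by simp
    moreover have "4 * lG\<^sup>2 / (real dG)\<^sup>2 = 4 * (lG\<^sup>2 / (real dG)\<^sup>2)" by simp
    moreover have "\<And>a b e. a \<le> e \<Longrightarrow> b \<le> e \<Longrightarrow> 4 * a + 2 * b \<le> 6 * (e::real)" by linarith
    ultimately show ?thesis unfolding c_def by metis
  qed
  have cpos: "0 < c"
  proof -
    have "0 < 4 * lG\<^sup>2 / (real dG)\<^sup>2" using lGpos dG0 by simp
    moreover have "0 \<le> 2 * lF * lG / (real dF * real dG)" using lF0 lG0 dF0 dG0 by simp
    ultimately show ?thesis unfolding c_def by (metis add_pos_nonneg)
  qed
  have d0: "0 < \<delta>" using dG0 n0 by (simp add: \<delta>_def)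
  have d1: "\<delta> < 1" using dGn n0 by (simp add: \<delta>_def field_simps)
  have ln1: "1 \<le> ln (real n)"
  proof -
    have "ln (exp 1) \<le> ln (real n)" using exp_le assms(2) by (intro ln_mono) auto
    thus ?thesis by simp
  qed
  have Lw: "Lf \<delta> n \<le> w"
  proof -
    have "Lf \<delta> n = 1 + 2 * real n * ln (real n) / real dG"
      using n0 dG0 by (simp add: Lf_def \<delta>_def field_simps)
    moreover have "1 \<le> 2 * real n * ln (real n) / real dG"
    proof -
      have "real dG \<le> real n" using dGn by simp
      also have "\<dots> \<le> 2 * real n * ln (real n)" using ln1 n0 by (simp add: mult_le_cancel_left1)
      finally show ?thesis using dG0 by (simp add: field_simps)
    qed
    moreover have "w = 2 * (2 * real n * ln (real n) / real dG)" by (simp add: w_def)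
    moreover have "\<And>L t w. L = 1 + t \<Longrightarrow> 1 \<le> t \<Longrightarrow> w = 2 * t \<Longrightarrow> L \<le> (w::real)" by linarith
    ultimately show ?thesis by metis
  qed
  have w0: "0 \<le> w" using ln1 n0 dG0 by (simp add: w_def)
  have Nr: "real N = real dF * real n" by (simp add: N_def)
  have bnd: "real (fwi N D k) \<le> 16 ^ k * rpow \<eta> (real k - w) * (real N) ^ k" if kw: "w \<le> real k" for k
  proof -
    define y where "y = real k - w"
    have y0: "0 \<le> y" and yk: "y \<le> real k" using kw w0 by (auto simp: y_def)
    have rp: "rpow \<eta> y = \<eta> powr y" using eta_pos by (simp add: rpow_def)
    have N0: "0 \<le> real N" by simp
    show ?thesis
    proof (cases "c \<le> 1")
      case True
      have bad: "real (card {e\<in>EF. snd e \<in> X \<and> real (card {b\<in>X. G (fst e) b}) \<le> \<delta> * real (card X)})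
          \<le> c * (real dF * real n)" if "X \<subseteq> {..<n}" for X
        unfolding EF_def \<delta>_def c_def
        by (rule bad_bound[OF mixF mixG lF0 lG0 n0 _ _ that]) (use assms(3,4) in auto)
      have mb: "real (card (Seq EF G k {..<n})) \<le> 2^k * (real dF * real n)^k * c powr (real k - Lf \<delta> (card {..<n}))"
        by (rule main_bound[OF finEF EFn _ d0 d1 cpos True bad]) (auto simp: cardEF Nr)
      have "real (fwi N D k) \<le> real (card (Seq EF G k {..<n}))" using fwi_le[of k] by simp
      also have "\<dots> \<le> 2^k * real N ^ k * c powr (real k - Lf \<delta> n)" using mb by (simp add: Nr)
      also have "c powr (real k - Lf \<delta> n) \<le> c powr y"
        using Lw cpos True by (intro powr_mono') (auto simp: y_def)
      also have "c powr y \<le> (6 * \<eta>) powr y" using y0 cpos c6 by (intro powr_mono2) auto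
      also have "(6 * \<eta>) powr y = 6 powr y * \<eta> powr y" by (rule powr_mult)
      also have "6 powr y \<le> 6 powr (real k)" using yk by (intro powr_mono) auto
      also have "(6::real) powr (real k) = 6 ^ k" by (simp add: powr_realpow)
      finally have A: "real (fwi N D k) \<le> 2^k * real N ^ k * (6 ^ k * \<eta> powr y)"
        using N0 eta_pos by (simp add: mult_left_mono mult_right_mono)
      have e12: "(2::real)^k * 6^k = 12^k"
      proof -
        have "(2::real)^k * 6^k = (2*6)^k" by (rule power_mult_distrib[symmetric])
        thus ?thesis by simp
      qed
      have "2^k * real N ^ k * (6 ^ k * \<eta> powr y) = (2^k * 6^k) * \<eta> powr y * real N ^ k"
        by (simp only: mult_ac)
      also have "\<dots> = 12 ^ k * \<eta> powr y * real N ^ k" by (simp only: e12)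
      also have "\<dots> \<le> 16 ^ k * \<eta> powr y * real N ^ k"
        using eta_pos N0 by (intro mult_right_mono power_mono) auto
      finally show ?thesis using A rp by (simp add: y_def)
    next
      case False
      hence eta6: "1 / 6 < \<eta>" using c6 by simp
      have "fwi N D k \<le> card {xs. set xs \<subseteq> {0..<N} \<and> length xs = k}"
        unfolding fwi_def by (intro card_mono finite_lists_length_eq) auto
      also have "\<dots> = N ^ k" by (simp add: card_lists_length_eq)
      finally have A: "real (fwi N D k) \<le> real N ^ k" by (metis of_nat_le_iff of_nat_power)
      have B: "1 \<le> 16 ^ k * \<eta> powr y"
      proof (cases "1 \<le> \<eta>")
        case True
        have "1 \<le> \<eta> powr y" using True y0 by (rule ge_one_powr_ge_zero)
        moreover have "(1::real) \<le> 16 ^ k" by simp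
        ultimately show ?thesis by (metis mult_mono' mult_1 zero_le_one order_trans)
      next
        case False
        have "\<eta> powr (real k) \<le> \<eta> powr y" using yk False eta_pos by (intro powr_mono') auto
        moreover have "\<eta> powr (real k) = \<eta> ^ k" using eta_pos by (simp add: powr_realpow)
        moreover have "(1/6) ^ k \<le> \<eta> ^ k" using eta6 by (intro power_mono) auto
        ultimately have "(1/6) ^ k \<le> \<eta> powr y" by linarith
        hence "16 ^ k * (1/6) ^ k \<le> 16 ^ k * \<eta> powr y" by (intro mult_left_mono) auto
        moreover have "(1::real) \<le> 16 ^ k * (1/6) ^ k"
        proof -
          have "(16::real) ^ k * (1/6) ^ k = (16/6) ^ k" by (simp add: power_mult_distrib[symmetric])
          moreover have "(1::real) \<le> (16/6) ^ k" by (intro one_le_power) auto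
          ultimately show ?thesis by simp
        qed
        ultimately show ?thesis by linarith
      qed
      have "real N ^ k \<le> (16 ^ k * \<eta> powr y) * real N ^ k"
        using B N0 by (metis mult_1 mult_right_mono zero_le_power)
      with A have C: "real (fwi N D k) \<le> 16 ^ k * \<eta> powr y * real N ^ k" by (rule order_trans)
      show ?thesis unfolding y_def[symmetric] rp using C .
    qed
  qed
  show ?thesis
    using dig tsf bnd unfolding N_def \<eta>_def w_def by blast
qed


end
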